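(* Let $X$ be a Hilbert space with unit sphere $S_X$, let $C\subseteq X$ be a subset, and let $N:C\to S_X$ be a mapping. Then the following statements are equivalent. (1) There exists a $C^{1,1}$ convex body $V\subseteq X$ such that $C\subseteq \partial V$ and $N(x)$ is the outer unit normal to $\partial V$ at $x$ for every $x\in C$. (2) There exists some $r>0$ such that $$\langle N(y), y-x\rangle \geq \tfrac{r}{2}\|N(y)-N(x)\|^2 \quad\text{for all } x,y\in C.$$ Moreover, if (2) holds with a constant $r>0$, then the body $V$ in (1) can be chosen so that its outer unit normal $N_{\partial V}:\partial V\to S_X$ is $r^{-1}$-Lipschitz. In addition, if $C$ is bounded, then $V$ can be taken to be bounded as well.
   Context: A convex body in $X$ is a closed convex set with nonempty interior; convex bodies are allowed to be unbounded. A convex body $V$ is of class $C^{1,1}$ if $\partial V$ is a $C^1$ submanifold (so that the outer unit normal $N_{\partial V}:\partial V\to S_X$ is well defined and continuous) and $N_{\partial V}$ is Lipschitz with respect to the ambient norm, i.e. there is $L>0$ with $\|N_{\partial V}(x)-N_{\partial V}(y)\|\le L\|x-y\|$ for all $x,y\in\partial V$. *)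

theory Defs
  imports "HOL-Analysis.Analysis"
begin

text \<open>A real Hilbert space is modelled by a type of class real_inner and complete_space.\<close>

definition convex_body :: "'a::real_normed_vector set \<Rightarrow> bool" where
  "convex_body V \<longleftrightarrow> closed V \<and> convex V \<and> interior V \<noteq> {}"

text \<open>Codimension-one C^1 submanifold: locally the regular zero set of a C^1 function
  (derivative represented by its gradient, continuous in norm, nonvanishing).\<close>
definition C1_hypersurface :: "'a::real_inner set \<Rightarrow> bool" where
  "C1_hypersurface M \<longleftrightarrow>
     (\<forall>x\<in>M. \<exists>U F g. open U \<and> x \<in> U \<and>
        (\<forall>y\<in>U. (F has_derivative (\<lambda>h. g y \<bullet> h)) (at y) \<and> g y \<noteq> 0) \<and>
        continuous_on U g \<and>
        M \<inter> U = {y\<in>U. F y = (0::real)})"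

definition outer_unit_normal :: "'a::real_inner set \<Rightarrow> 'a \<Rightarrow> 'a \<Rightarrow> bool" where
  "outer_unit_normal V x n \<longleftrightarrow> norm n = 1 \<and> (\<forall>y\<in>V. n \<bullet> (y - x) \<le> 0)"

text \<open>The outer unit normal map of the boundary is L-Lipschitz (this also forces uniqueness).\<close>
definition normal_lipschitz :: "'a::real_inner set \<Rightarrow> real \<Rightarrow> bool" where
  "normal_lipschitz V L \<longleftrightarrow>
     (\<forall>x\<in>frontier V. \<forall>y\<in>frontier V. \<forall>nx ny.
        outer_unit_normal V x nx \<and> outer_unit_normal V y ny \<longrightarrow> norm (nx - ny) \<le> L * norm (x - y))"

definition C11_convex_body :: "'a::real_inner set \<Rightarrow> bool" where
  "C11_convex_body V \<longleftrightarrow> convex_body V \<and> C1_hypersurface (frontier V) \<and>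
     (\<forall>x\<in>frontier V. \<exists>n. outer_unit_normal V x n) \<and>
     (\<exists>L>0. normal_lipschitz V L)"

end

theory Submission
  imports Defs
begin

lemma parallelogram_mid:
  fixes a b z :: "'a::real_inner"
  shows "(norm (a - b))^2 = 2*(norm (z-a))^2 + 2*(norm (z-b))^2 - 4*(norm (z - (1/2) *\<^sub>R (a+b)))^2"
  unfolding power2_norm_eq_inner
  by (simp add: inner_diff_left inner_diff_right inner_add_left inner_add_right inner_commute algebra_simps)

lemma proj_exists:
  fixes K :: "'a::{real_inner,complete_space} set"
  assumes cl: "closed K" and cv: "convex K" and ne: "K \<noteq> {}"
  shows "\<exists>p\<in>K. \<forall>k\<in>K. norm (z - p) \<le> norm (z - k)"
proof -
  define \<delta> where "\<delta> = Inf ((\<lambda>k. norm (z - k)) ` K)"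
  have bdd: "bdd_below ((\<lambda>k. norm (z-k)) ` K)" by (auto intro: bdd_belowI[of _ 0])
  have dle: "\<delta> \<le> norm (z - k)" if "k \<in> K" for k
    unfolding \<delta>_def using that bdd by (auto intro: cInf_lower)
  have d0: "\<delta> \<ge> 0"
  proof -
    obtain k where "k \<in> K" using ne by blast
    then show ?thesis unfolding \<delta>_def using ne
      by (intro cInf_greatest) auto
  qed
  have "\<exists>k\<in>K. norm (z - k) < \<delta> + 1/Suc n" for n
  proof -
    have "Inf ((\<lambda>k. norm (z - k)) ` K) < \<delta> + 1/Suc n" unfolding \<delta>_def by simp
    from cInf_lessD[OF _ this] ne show ?thesis by auto
  qed
  then obtain s where s: "\<And>n. s n \<in> K" "\<And>n. norm (z - s n) < \<delta> + 1/Suc n" by metis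
  have key: "(norm (s m - s n))^2 \<le> (4*\<delta>+4) * (1/Suc m + 1/Suc n)" for m n
  proof -
    define em where "em = 1/real (Suc m)"
    define en where "en = 1/real (Suc n)"
    have em: "0 < em" "em \<le> 1" and en: "0 < en" "en \<le> 1" unfolding em_def en_def by (auto simp: field_simps)
    have mid: "(1/2) *\<^sub>R (s m + s n) \<in> K"
    proof -
      have "(1/2) *\<^sub>R (s m + s n) = (1 - 1/2) *\<^sub>R s m + (1/2) *\<^sub>R s n" by (simp add: algebra_simps)
      then show ?thesis using convexD[OF cv s(1)[of m] s(1)[of n], of "1/2" "1/2"] by simp
    qed
    have h1: "(norm (z - s m))^2 \<le> (\<delta> + em)^2"
      using s(2)[of m] norm_ge_zero unfolding em_def by (intro power_mono) auto
    have h2: "(norm (z - s n))^2 \<le> (\<delta> + en)^2"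
      using s(2)[of n] norm_ge_zero unfolding en_def by (intro power_mono) auto
    have h3: "\<delta>^2 \<le> (norm (z - (1/2) *\<^sub>R (s m + s n)))^2"
      using dle[OF mid] d0 by (intro power_mono) auto
    have "(norm (s m - s n))^2 \<le> 2*(\<delta> + em)^2 + 2*(\<delta> + en)^2 - 4*\<delta>^2"
      using parallelogram_mid[of "s m" "s n" z] h1 h2 h3 by linarith
    also have "\<dots> = 4*\<delta>*(em+en) + 2*(em*em + en*en)" by (simp add: power2_eq_square algebra_simps)
    also have "\<dots> \<le> 4*\<delta>*(em+en) + 2*(em + en)"
      using em en by (intro add_left_mono mult_left_mono add_mono) (auto intro: mult_le_one[of _ 1, simplified] simp: mult_le_cancel_left1)
    also have "\<dots> \<le> (4*\<delta>+4) * (em+en)" using em en d0 by (simp add: algebra_simps)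
    finally show ?thesis unfolding em_def en_def .
  qed
  have "Cauchy s"
  proof (rule metric_CauchyI)
    fix e :: real assume e: "e > 0"
    obtain M :: nat where M: "(8*\<delta>+8) / e^2 < M" using reals_Archimedean2 by blast
    have "(8*\<delta>+8) / e^2 > 0" using d0 e by (intro divide_pos_pos) auto
    then have Mpos: "M > 0" using M by linarith
    show "\<exists>M. \<forall>m\<ge>M. \<forall>n\<ge>M. dist (s m) (s n) < e"
    proof (intro exI allI impI)
      fix m n assume mn: "m \<ge> M" "n \<ge> M"
      have "1/real (Suc m) \<le> 1/M" using mn Mpos by (simp add: frac_le)
      moreover have "1/real (Suc n) \<le> 1/M" using mn Mpos by (simp add: frac_le)
      ultimately have "(4*\<delta>+4) * (1/Suc m + 1/Suc n) \<le> (4*\<delta>+4) * (2/M)"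
        using d0 by (intro mult_left_mono) auto
      also have "\<dots> = (8*\<delta>+8)/M" by (simp add: field_simps)
      also have "\<dots> < e^2" using M Mpos e d0 by (simp add: field_simps)
      finally have "(norm (s m - s n))^2 < e^2" using key[of m n] by linarith
      then show "dist (s m) (s n) < e" using e by (simp add: dist_norm power_less_imp_less_base)
    qed
  qed
  then obtain p where p: "s \<longlonglongrightarrow> p" using Cauchy_convergent_iff convergent_def by blast
  have pK: "p \<in> K" using closed_sequentially[OF cl] s(1) p by blast
  have "norm (z - p) \<le> \<delta>"
  proof (rule LIMSEQ_le)
    show "(\<lambda>n. norm (z - s n)) \<longlonglongrightarrow> norm (z - p)" by (intro tendsto_intros p)
    show "(\<lambda>n. \<delta> + 1/real (Suc n)) \<longlonglongrightarrow> \<delta>"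
      using tendsto_add[OF tendsto_const[of \<delta>] LIMSEQ_inverse_real_of_nat] by (simp add: divide_inverse)
    show "\<exists>N. \<forall>n\<ge>N. norm (z - s n) \<le> \<delta> + 1/real (Suc n)" using s(2) less_imp_le by blast
  qed
  then show ?thesis using pK dle by force
qed

locale hproj =
  fixes K :: "'a::{real_inner,complete_space} set"
  assumes cl: "closed K" and cv: "convex K" and ne: "K \<noteq> {}"
begin

definition P :: "'a \<Rightarrow> 'a" where
  "P z = (SOME p. p \<in> K \<and> (\<forall>k\<in>K. norm (z - p) \<le> norm (z - k)))"

lemma P_spec: "P z \<in> K \<and> (\<forall>k\<in>K. norm (z - P z) \<le> norm (z - k))"
proof -
  obtain p where "p \<in> K \<and> (\<forall>k\<in>K. norm (z - p) \<le> norm (z - k))" using proj_exists[OF cl cv ne, of z] by blast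
  then show ?thesis unfolding P_def by (rule someI)
qed

lemma P_in: "P z \<in> K" using P_spec by blast
lemma P_min: "k \<in> K \<Longrightarrow> norm (z - P z) \<le> norm (z - k)" using P_spec by blast

lemma P_var: assumes k: "k \<in> K" shows "(z - P z) \<bullet> (k - P z) \<le> 0"
proof (rule ccontr)
  define a where "a = z - P z"
  define b where "b = k - P z"
  assume "\<not> ?thesis"
  then have c: "a \<bullet> b > 0" unfolding a_def b_def by simp
  then have "b \<noteq> 0" by auto
  then have bb: "b \<bullet> b > 0" by simp
  define t where "t = min 1 ((a \<bullet> b) / (b \<bullet> b))"
  have t: "0 < t" "t \<le> 1" "t * (b \<bullet> b) \<le> a \<bullet> b"
    using c bb unfolding t_def by (auto simp: min_def field_simps)
  have q: "(1 - t) *\<^sub>R P z + t *\<^sub>R k \<in> K"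
    using convexD[OF cv P_in k, of "1-t" t] t by simp
  have eq: "z - ((1 - t) *\<^sub>R P z + t *\<^sub>R k) = a - t *\<^sub>R b"
    unfolding a_def b_def by (simp add: algebra_simps)
  have "(norm (a - t *\<^sub>R b))^2 = a \<bullet> a - 2 * t * (a \<bullet> b) + t * (t * (b \<bullet> b))"
    unfolding power2_norm_eq_inner by (simp add: inner_diff_left inner_diff_right inner_commute algebra_simps)
  also have "\<dots> \<le> a \<bullet> a - 2 * t * (a \<bullet> b) + t * (a \<bullet> b)"
    using t by (intro add_left_mono mult_left_mono) auto
  also have "\<dots> < a \<bullet> a" using t c by (simp add: algebra_simps)
  also have "\<dots> = (norm a)^2" by (simp add: power2_norm_eq_inner)
  finally have "norm (a - t *\<^sub>R b) < norm a" using norm_ge_zero power_less_imp_less_base by blast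
  moreover have "norm a \<le> norm (a - t *\<^sub>R b)"
    using P_min[OF q, of z] unfolding eq a_def .
  ultimately show False by simp
qed

lemma P_nonexp2:
  "(norm ((x - P x) - (y - P y)))^2 + (norm (P x - P y))^2 \<le> (norm (x - y))^2"
proof -
  define a where "a = x - P x"
  define b where "b = y - P y"
  define p where "p = P x"
  define q where "q = P y"
  have 1: "a \<bullet> (q - p) \<le> 0" unfolding a_def p_def q_def using P_var[OF P_in] .
  have 2: "b \<bullet> (p - q) \<le> 0" unfolding b_def p_def q_def using P_var[OF P_in] .
  have xy: "x - y = (a - b) + (p - q)" unfolding a_def b_def p_def q_def by simp
  have "(norm (x - y))^2 = (norm (a - b))^2 + 2 * ((a - b) \<bullet> (p - q)) + (norm (p - q))^2"
    unfolding xy power2_norm_eq_inner by (simp add: inner_add_left inner_add_right inner_commute)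
  moreover have "(a - b) \<bullet> (p - q) \<ge> 0" using 1 2
    by (simp add: inner_diff_left inner_diff_right inner_commute algebra_simps)
  ultimately show ?thesis unfolding a_def b_def p_def q_def by linarith
qed

lemma P_lip1: "norm ((x - P x) - (y - P y)) \<le> norm (x - y)"
proof -
  have "(norm ((x - P x) - (y - P y)))^2 \<le> (norm (x - y))^2"
    using P_nonexp2[of x y] zero_le_power2[of "norm (P x - P y)"] by linarith
  then show ?thesis by (rule power2_le_imp_le) simp
qed

lemma P_lip2: "norm (P x - P y) \<le> norm (x - y)"
proof -
  have "(norm (P x - P y))^2 \<le> (norm (x - y))^2"
    using P_nonexp2[of x y] zero_le_power2[of "norm ((x - P x) - (y - P y))"] by linarith
  then show ?thesis by (rule power2_le_imp_le) simp
qed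

lemma P_cont: "continuous_on A P"
  by (rule lipschitz_on_continuous_on[of 1], rule lipschitz_onI) (auto simp: dist_norm P_lip2)

definition d :: "'a \<Rightarrow> real" where "d z = norm (z - P z)"

lemma d_cont: "continuous_on A d"
  unfolding d_def by (intro continuous_intros P_cont)

lemma d_le: "k \<in> K \<Longrightarrow> d z \<le> norm (z - k)" unfolding d_def by (rule P_min)

lemma d_lower:
  assumes "d z > 0"
  shows "d w \<ge> d z + ((1 / d z) *\<^sub>R (z - P z)) \<bullet> (w - z)"
proof -
  define n where "n = (1 / d z) *\<^sub>R (z - P z)"
  have nn: "norm n = 1" unfolding n_def using assms by (simp add: d_def)
  have "(w - P w) \<bullet> n \<le> norm (w - P w) * norm n" by (rule norm_cauchy_schwarz)
  then have A: "(w - P w) \<bullet> n \<le> d w" using nn by (simp add: d_def)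
  have B: "(z - P z) \<bullet> n = d z" unfolding n_def using assms
    by (simp add: d_def power2_norm_eq_inner[symmetric] power2_eq_square)
  have C: "(P z - P w) \<bullet> n \<ge> 0"
  proof -
    have v: "(z - P z) \<bullet> (P w - P z) \<le> 0" by (rule P_var[OF P_in])
    have "(P z - P w) \<bullet> n = (1 / d z) * ((z - P z) \<bullet> (P z - P w))"
      unfolding n_def by (simp add: inner_commute)
    also have "(z - P z) \<bullet> (P z - P w) = - ((z - P z) \<bullet> (P w - P z))"
      by (simp add: inner_diff_right)
    finally show ?thesis using divide_nonpos_pos[OF v assms] by simp
  qed
  have "(w - P w) \<bullet> n = (w - z) \<bullet> n + (z - P z) \<bullet> n + (P z - P w) \<bullet> n"
    by (simp add: inner_diff_left)
  then show ?thesis using A B C unfolding n_def[symmetric] by (simp add: inner_commute)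
qed

lemma norm_upper:
  fixes a h :: 'a
  assumes a: "a \<noteq> 0"
  shows "norm (a + h) \<le> norm a + (a \<bullet> h) / norm a + (norm h)^2 / (2 * norm a)"
proof -
  define X where "X = (a \<bullet> h) / norm a + (norm h)^2 / (2 * norm a)"
  have na: "norm a > 0" using a by simp
  have cs: "- (norm a * norm h) \<le> a \<bullet> h" using norm_cauchy_schwarz[of "-a" h] by simp
  have "-(norm h) \<le> (a \<bullet> h) / norm a" using cs na by (simp add: le_divide_eq mult.commute)
  then have "norm a + X \<ge> norm a - norm h + (norm h)^2 / (2 * norm a)"
    unfolding X_def by linarith
  also have "norm a - norm h + (norm h)^2 / (2 * norm a) = ((norm a - norm h)^2 + (norm a)^2) / (2 * norm a)"
    using na by (simp add: field_simps power2_eq_square)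
  also have "\<dots> \<ge> 0" using na by simp
  finally have pos: "norm a + X \<ge> 0" .
  have "(norm (a + h))^2 = (norm a)^2 + 2 * (a \<bullet> h) + (norm h)^2"
    unfolding power2_norm_eq_inner by (simp add: inner_add_left inner_add_right inner_commute)
  also have "\<dots> = (norm a)^2 + 2 * norm a * X"
    unfolding X_def using na by (simp add: field_simps power2_eq_square)
  also have "\<dots> \<le> (norm a + X)^2" by (simp add: power2_eq_square algebra_simps)
  finally have "norm (a + h) \<le> norm a + X" using pos by (rule power2_le_imp_le)
  then show ?thesis unfolding X_def by simp
qed

lemma d_upper:
  assumes "d z > 0"
  shows "d w \<le> d z + ((1 / d z) *\<^sub>R (z - P z)) \<bullet> (w - z) + (norm (w - z))^2 / (2 * d z)"
proof -
  have a: "z - P z \<noteq> 0" using assms by (auto simp: d_def)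
  have 1: "d w \<le> norm (w - P z)" by (rule d_le[OF P_in])
  have 2: "w - P z = (z - P z) + (w - z)" by simp
  have 3: "norm ((z - P z) + (w - z)) \<le> norm (z - P z) + ((z - P z) \<bullet> (w - z)) / norm (z - P z) + (norm (w - z))^2 / (2 * norm (z - P z))"
    by (rule norm_upper[OF a])
  have 4: "((1 / d z) *\<^sub>R (z - P z)) \<bullet> (w - z) = ((z - P z) \<bullet> (w - z)) / d z"
    by (simp only: inner_scaleR_left) simp
  have 5: "norm (z - P z) = d z" by (simp only: d_def)
  show ?thesis unfolding 4 using 1 3 unfolding 2 5 by linarith
qed

lemma d_deriv:
  assumes dz: "d z > 0"
  shows "(d has_derivative (\<lambda>h. ((1 / d z) *\<^sub>R (z - P z)) \<bullet> h)) (at z)"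
  unfolding has_derivative_at'
proof (intro conjI allI impI)
  show "bounded_linear (\<lambda>h. ((1 / d z) *\<^sub>R (z - P z)) \<bullet> h)" by (rule bounded_linear_inner_right)
  fix e :: real assume e: "e > 0"
  show "\<exists>\<delta>>0. \<forall>x'. 0 < norm (x' - z) \<and> norm (x' - z) < \<delta> \<longrightarrow>
          norm (d x' - d z - ((1 / d z) *\<^sub>R (z - P z)) \<bullet> (x' - z)) / norm (x' - z) < e"
  proof (intro exI conjI allI impI)
    show "e * d z > 0" using e dz by simp
    fix x' assume x': "0 < norm (x' - z) \<and> norm (x' - z) < e * d z"
    define E where "E = d x' - d z - ((1 / d z) *\<^sub>R (z - P z)) \<bullet> (x' - z)"
    have E0: "0 \<le> E" unfolding E_def using d_lower[OF dz, of x'] by simp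
    have E1: "E \<le> (norm (x' - z))^2 / (2 * d z)" unfolding E_def using d_upper[OF dz, of x'] by simp
    have "norm E / norm (x' - z) \<le> ((norm (x' - z))^2 / (2 * d z)) / norm (x' - z)"
      using E0 E1 x' by (intro divide_right_mono) auto
    also have "\<dots> = norm (x' - z) / (2 * d z)" using x' by (simp add: power2_eq_square)
    also have "\<dots> < e"
    proof -
      have "e * d z < e * (2 * d z)" using dz e by simp
      then have "norm (x' - z) < e * (2 * d z)" using x' by linarith
      then show ?thesis using dz by (simp add: field_simps)
    qed
    finally show "norm (d x' - d z - ((1 / d z) *\<^sub>R (z - P z)) \<bullet> (x' - z)) / norm (x' - z) < e"
      unfolding E_def by simp
  qed
qed

end

context hproj begin

lemma V_closed: "closed {z. d z \<le> r}"
  by (rule closed_Collect_le[OF d_cont continuous_on_const])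

lemma V_convex: "convex {z. d z \<le> r}"
proof (rule convexI)
  fix x y :: 'a and u v :: real
  assume x: "x \<in> {z. d z \<le> r}" and y: "y \<in> {z. d z \<le> r}" and uv: "0 \<le> u" "0 \<le> v" "u + v = 1"
  define q where "q = u *\<^sub>R P x + v *\<^sub>R P y"
  have qK: "q \<in> K" unfolding q_def by (rule convexD[OF cv P_in P_in uv])
  have eq: "u *\<^sub>R x + v *\<^sub>R y - q = u *\<^sub>R (x - P x) + v *\<^sub>R (y - P y)"
    unfolding q_def by (simp add: algebra_simps)
  have "d (u *\<^sub>R x + v *\<^sub>R y) \<le> norm (u *\<^sub>R x + v *\<^sub>R y - q)" by (rule d_le[OF qK])
  also have "\<dots> \<le> norm (u *\<^sub>R (x - P x)) + norm (v *\<^sub>R (y - P y))" unfolding eq by (rule norm_triangle_ineq)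
  also have "\<dots> = u * d x + v * d y" using uv by (simp add: d_def)
  also have "\<dots> \<le> u * r + v * r" using x y uv by (intro add_mono mult_left_mono) auto
  also have "\<dots> = (u + v) * r" by (simp add: algebra_simps)
  also have "\<dots> = r" using uv by simp
  finally show "u *\<^sub>R x + v *\<^sub>R y \<in> {z. d z \<le> r}" by simp
qed

lemma V_open_part: "{z. d z < r} \<subseteq> interior {z. d z \<le> r}"
  by (rule interior_maximal) (auto intro: open_Collect_less[OF d_cont continuous_on_const])

lemma V_not_interior:
  assumes r: "r > 0" and dz: "d z = r"
  shows "z \<notin> interior {z. d z \<le> r}"
proof
  assume "z \<in> interior {z. d z \<le> r}"
  then obtain e where e: "e > 0" "ball z e \<subseteq> {z. d z \<le> r}" by (auto simp: mem_interior)
  define n where "n = (1 / d z) *\<^sub>R (z - P z)"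
  have nn: "norm n = 1" unfolding n_def using dz r by (simp add: d_def)
  define w where "w = z + (e/2) *\<^sub>R n"
  have "dist z w < e" unfolding w_def dist_norm using nn e by simp
  then have "d w \<le> r" using e by auto
  moreover have "d w \<ge> d z + n \<bullet> (w - z)" unfolding n_def using d_lower[of z w] dz r by simp
  moreover have "n \<bullet> (w - z) = e/2" unfolding w_def using nn by (simp add: power2_norm_eq_inner[symmetric])
  ultimately show False using dz e by simp
qed

lemma V_frontier:
  assumes r: "r > 0"
  shows "frontier {z. d z \<le> r} = {z. d z = r}"
proof -
  have "frontier {z. d z \<le> r} = {z. d z \<le> r} - interior {z. d z \<le> r}"
    unfolding frontier_def using V_closed closure_closed by metis
  then show ?thesis using V_open_part V_not_interior[OF r] by force
qed

lemma V_normal: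
  assumes r: "r > 0" and dz: "d z = r"
  shows "outer_unit_normal {z. d z \<le> r} z ((1 / r) *\<^sub>R (z - P z))"
  unfolding outer_unit_normal_def
proof (intro conjI ballI)
  show "norm ((1 / r) *\<^sub>R (z - P z)) = 1" using dz r by (simp add: d_def)
  fix y assume y: "y \<in> {z. d z \<le> r}"
  have "d y \<ge> d z + ((1 / d z) *\<^sub>R (z - P z)) \<bullet> (y - z)" using d_lower[of z y] dz r by simp
  then show "((1 / r) *\<^sub>R (z - P z)) \<bullet> (y - z) \<le> 0" using y dz by simp
qed

lemma V_normal_unique:
  assumes r: "r > 0" and dz: "d z = r" and m: "outer_unit_normal {z. d z \<le> r} z m"
  shows "m = (1 / r) *\<^sub>R (z - P z)"
proof -
  define n where "n = (1 / r) *\<^sub>R (z - P z)"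
  have nn: "norm n = 1" unfolding n_def using dz r by (simp add: d_def)
  have mm: "norm m = 1" and sup: "\<forall>y\<in>{z. d z \<le> r}. m \<bullet> (y - z) \<le> 0"
    using m unfolding outer_unit_normal_def by auto
  have zn: "z - P z = r *\<^sub>R n" unfolding n_def using r by simp
  have "d (P z + r *\<^sub>R m) \<le> norm (P z + r *\<^sub>R m - P z)" by (rule d_le[OF P_in])
  also have "\<dots> = r" using mm r by simp
  finally have "m \<bullet> (P z + r *\<^sub>R m - z) \<le> 0" using sup by auto
  also have "P z + r *\<^sub>R m - z = r *\<^sub>R (m - n)" using zn by (simp add: algebra_simps)
  finally have "r * (m \<bullet> m - m \<bullet> n) \<le> 0" by (simp add: inner_diff_right)
  then have mn: "m \<bullet> n \<ge> 1" using r mm by (simp add: mult_le_0_iff power2_norm_eq_inner[symmetric])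
  have "(norm (m - n))^2 = m \<bullet> m - 2 * (m \<bullet> n) + n \<bullet> n"
    unfolding power2_norm_eq_inner by (simp add: inner_diff_left inner_diff_right inner_commute)
  also have "\<dots> = 2 - 2 * (m \<bullet> n)" using mm nn by (simp add: power2_norm_eq_inner[symmetric])
  finally have "(norm (m - n))^2 \<le> 0" using mn by simp
  then show ?thesis unfolding n_def[symmetric] by simp
qed

lemma V_lip:
  assumes r: "r > 0"
  shows "normal_lipschitz {z. d z \<le> r} (1 / r)"
  unfolding normal_lipschitz_def
proof (intro ballI allI impI)
  fix x y nx ny
  assume x: "x \<in> frontier {z. d z \<le> r}" and y: "y \<in> frontier {z. d z \<le> r}"
    and n: "outer_unit_normal {z. d z \<le> r} x nx \<and> outer_unit_normal {z. d z \<le> r} y ny"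
  have dx: "d x = r" and dy: "d y = r" using x y V_frontier[OF r] by auto
  have nx: "nx = (1 / r) *\<^sub>R (x - P x)" using V_normal_unique[OF r dx] n by blast
  have ny: "ny = (1 / r) *\<^sub>R (y - P y)" using V_normal_unique[OF r dy] n by blast
  have "nx - ny = (1 / r) *\<^sub>R ((x - P x) - (y - P y))"
    unfolding nx ny by (simp only: scaleR_diff_right)
  then have "norm (nx - ny) = (1 / r) * norm ((x - P x) - (y - P y))" using r by simp
  also have "\<dots> \<le> (1 / r) * norm (x - y)" using r P_lip1 by (intro mult_left_mono) auto
  finally show "norm (nx - ny) \<le> 1 / r * norm (x - y)" .
qed

lemma V_C1:
  assumes r: "r > 0"
  shows "C1_hypersurface (frontier {z. d z \<le> r})"
  unfolding C1_hypersurface_def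
proof (intro ballI)
  fix x assume x: "x \<in> frontier {z. d z \<le> r}"
  define U where "U = {z. r / 2 < d z}"
  have oU: "open U" unfolding U_def by (rule open_Collect_less[OF continuous_on_const d_cont])
  have xU: "x \<in> U" using x V_frontier[OF r] r unfolding U_def by auto
  define g where "g y = (1 / d y) *\<^sub>R (y - P y)" for y
  have "(\<forall>y\<in>U. ((\<lambda>y. d y - r) has_derivative (\<lambda>h. g y \<bullet> h)) (at y) \<and> g y \<noteq> 0) \<and>
        continuous_on U g \<and> frontier {z. d z \<le> r} \<inter> U = {y\<in>U. d y - r = (0::real)}"
  proof (intro conjI ballI)
    fix y assume y: "y \<in> U"
    then have dy: "d y > 0" unfolding U_def using r by simp
    show "((\<lambda>y. d y - r) has_derivative (\<lambda>h. g y \<bullet> h)) (at y)"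
      unfolding g_def using has_derivative_diff[OF d_deriv[OF dy] has_derivative_const[of r]] by simp
    show "g y \<noteq> 0" unfolding g_def using dy by (simp add: d_def)
  next
    have nz: "\<forall>y\<in>U. d y \<noteq> 0" using r unfolding U_def by auto
    show "continuous_on U g" unfolding g_def
      by (intro continuous_intros d_cont P_cont) (use nz in auto)
  next
    show "frontier {z. d z \<le> r} \<inter> U = {y\<in>U. d y - r = 0}"
      using V_frontier[OF r] r unfolding U_def by auto
  qed
  then show "\<exists>U F g. open U \<and> x \<in> U \<and>
        (\<forall>y\<in>U. (F has_derivative (\<lambda>h. g y \<bullet> h)) (at y) \<and> g y \<noteq> 0) \<and>
        continuous_on U g \<and> frontier {z. d z \<le> r} \<inter> U = {y\<in>U. F y = (0::real)}"
    using oU xU by blast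
qed

lemma V_C11:
  assumes r: "r > 0"
  shows "C11_convex_body {z. d z \<le> r}"
  unfolding C11_convex_body_def convex_body_def
proof (intro conjI)
  show "closed {z. d z \<le> r}" by (rule V_closed)
  show "convex {z. d z \<le> r}" by (rule V_convex)
  obtain k where k: "k \<in> K" using ne by blast
  have "k \<in> {z. d z < r}" using d_le[OF k, of k] r by simp
  then show "interior {z. d z \<le> r} \<noteq> {}" using V_open_part by blast
  show "C1_hypersurface (frontier {z. d z \<le> r})" by (rule V_C1[OF r])
  show "\<forall>x\<in>frontier {z. d z \<le> r}. \<exists>n. outer_unit_normal {z. d z \<le> r} x n"
    using V_frontier[OF r] V_normal[OF r] by blast
  show "\<exists>L>0. normal_lipschitz {z. d z \<le> r} L" using V_lip[OF r] r by (intro exI[of _ "1/r"]) simp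
qed

end

lemma construct:
  fixes C :: "'a::{real_inner,complete_space} set" and N :: "'a \<Rightarrow> 'a"
  assumes N1: "\<forall>x\<in>C. norm (N x) = 1" and r: "r > 0"
    and H2: "\<forall>x\<in>C. \<forall>y\<in>C. N y \<bullet> (y - x) \<ge> r / 2 * (norm (N y - N x))\<^sup>2"
  shows "\<exists>V. C11_convex_body V \<and> C \<subseteq> frontier V \<and> (\<forall>x\<in>C. outer_unit_normal V x (N x))
                 \<and> normal_lipschitz V (1 / r) \<and> (bounded C \<longrightarrow> bounded V)"
proof -
  define c where "c x = x - r *\<^sub>R N x" for x
  define B where "B = (SOME B. B > 0 \<and> (\<forall>x\<in>C. norm x \<le> B))"
  define R where "R = B + r"
  define S :: "'a set" where "S = (if bounded C then cball 0 R else UNIV)"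
  define H where "H = (\<Inter>x\<in>C. {k. N x \<bullet> k \<le> N x \<bullet> c x})"
  define K where "K = H \<inter> S"
  have B: "B > 0 \<and> (\<forall>x\<in>C. norm x \<le> B)" if "bounded C"
  proof -
    have "\<exists>B. B > 0 \<and> (\<forall>x\<in>C. norm x \<le> B)" using that bounded_pos[of C] by blast
    then show ?thesis unfolding B_def by (rule someI_ex)
  qed
  have NN: "N x \<bullet> N x = 1" if "x \<in> C" for x
    using N1 that by (simp add: power2_norm_eq_inner[symmetric])
  have cH: "c y \<in> H" if y: "y \<in> C" for y
    unfolding H_def
  proof (intro InterI, clarify)
    fix x assume x: "x \<in> C"
    have h: "N x \<bullet> (x - y) \<ge> r / 2 * (norm (N x - N y))\<^sup>2" using H2 x y by blast
    have "(norm (N x - N y))\<^sup>2 = N x \<bullet> N x - 2 * (N x \<bullet> N y) + N y \<bullet> N y"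
      unfolding power2_norm_eq_inner by (simp add: inner_diff_left inner_diff_right inner_commute)
    also have "\<dots> = 2 - 2 * (N x \<bullet> N y)" using NN[OF x] NN[OF y] by simp
    finally have e: "(norm (N x - N y))\<^sup>2 = 2 - 2 * (N x \<bullet> N y)" .
    have "r / 2 * (norm (N x - N y))\<^sup>2 = r * (1 - N x \<bullet> N y)" unfolding e by (simp add: algebra_simps)
    then have h2: "N x \<bullet> (x - y) \<ge> r * (1 - N x \<bullet> N y)" using h by linarith
    have "N x \<bullet> c y - N x \<bullet> c x = - (N x \<bullet> (x - y)) - r * (N x \<bullet> N y) + r * (N x \<bullet> N x)"
      unfolding c_def by (simp add: inner_diff_right algebra_simps)
    also have "\<dots> \<le> 0" using h2 NN[OF x] by (simp add: algebra_simps)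
    finally show "N x \<bullet> c y \<le> N x \<bullet> c x" by simp
  qed
  have cS: "c y \<in> S" if y: "y \<in> C" for y
  proof (cases "bounded C")
    case True
    have "norm (c y) \<le> norm y + norm (r *\<^sub>R N y)" unfolding c_def by (rule norm_triangle_ineq4)
    also have "\<dots> \<le> B + r" using B[OF True] y N1 r by auto
    finally show ?thesis using True unfolding S_def R_def by simp
  qed (simp add: S_def)
  have clK: "closed K" unfolding K_def H_def S_def
    by (intro closed_Int closed_INT) (auto intro: closed_halfspace_le)
  have cvK: "convex K" unfolding K_def H_def S_def
    by (intro convex_Int convex_INT) (auto intro: convex_halfspace_le)
  have neK: "K \<noteq> {}"
  proof (cases "C = {}")
    case True
    then have "0 \<in> K" unfolding K_def H_def S_def R_def using B r by auto
    then show ?thesis by blast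
  next
    case False
    then obtain y where "y \<in> C" by blast
    then have "c y \<in> K" unfolding K_def using cH cS by blast
    then show ?thesis by blast
  qed
  interpret hproj K by unfold_locales (rule clK, rule cvK, rule neK)
  define V where "V = {z. d z \<le> r}"
  have dC: "d x = r" if x: "x \<in> C" for x
  proof (rule antisym)
    have "d x \<le> norm (x - c x)" using d_le cH cS x unfolding K_def by blast
    also have "\<dots> = r" unfolding c_def using N1 x r by simp
    finally show "d x \<le> r" .
    have "N x \<bullet> (x - P x) \<le> norm (N x) * norm (x - P x)" by (rule norm_cauchy_schwarz)
    then have 1: "N x \<bullet> (x - P x) \<le> d x" using N1 x by (simp add: d_def)
    have "P x \<in> H" using P_in unfolding K_def by blast
    then have 2: "N x \<bullet> P x \<le> N x \<bullet> c x" using x unfolding H_def by blast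
    have 3: "N x \<bullet> c x = N x \<bullet> x - r" unfolding c_def using NN[OF x] by (simp add: inner_diff_right)
    show "r \<le> d x" using 1 2 3 by (simp add: inner_diff_right)
  qed
  have fr: "frontier V = {z. d z = r}" unfolding V_def by (rule V_frontier[OF r])
  show ?thesis
  proof (intro exI[of _ V] conjI)
    show "C11_convex_body V" unfolding V_def by (rule V_C11[OF r])
    show "C \<subseteq> frontier V" using dC fr by auto
    show "normal_lipschitz V (1 / r)" unfolding V_def by (rule V_lip[OF r])
    show "\<forall>x\<in>C. outer_unit_normal V x (N x)"
      unfolding outer_unit_normal_def
    proof (intro ballI conjI)
      fix x y assume x: "x \<in> C" and y: "y \<in> V"
      have "N x \<bullet> (y - P y) \<le> norm (N x) * norm (y - P y)" by (rule norm_cauchy_schwarz)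
      then have 1: "N x \<bullet> (y - P y) \<le> r" using N1 x y by (simp add: d_def V_def)
      have "P y \<in> H" using P_in unfolding K_def by blast
      then have 2: "N x \<bullet> P y \<le> N x \<bullet> c x" using x unfolding H_def by blast
      have 3: "N x \<bullet> c x = N x \<bullet> x - r" unfolding c_def using NN[OF x] by (simp add: inner_diff_right)
      show "N x \<bullet> (y - x) \<le> 0" using 1 2 3 by (simp add: inner_diff_right)
    next
      fix x assume "x \<in> C" then show "norm (N x) = 1" using N1 by blast
    qed
    show "bounded C \<longrightarrow> bounded V"
    proof
      assume bC: "bounded C"
      have "V \<subseteq> cball 0 (R + r)"
      proof
        fix z assume z: "z \<in> V"
        have "P z \<in> S" using P_in unfolding K_def by blast
        then have "norm (P z) \<le> R" using bC unfolding S_def by simp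
        moreover have "norm (z - P z) \<le> r" using z unfolding V_def d_def by simp
        moreover have "norm z \<le> norm (P z) + norm (z - P z)" using norm_triangle_ineq[of "P z" "z - P z"] by simp
        ultimately show "z \<in> cball 0 (R + r)" by simp
      qed
      then show "bounded V" using bounded_cball bounded_subset by blast
    qed
  qed
qed

lemma nsq: "(norm (a + b))\<^sup>2 = (norm a)\<^sup>2 + 2 * (a \<bullet> b) + (norm b)\<^sup>2"
  for a b :: "'a::real_inner"
  unfolding power2_norm_eq_inner by (simp add: inner_add_left inner_add_right inner_commute)

lemma uu_inner: "norm u = 1 \<Longrightarrow> u \<bullet> u = 1" for u :: "'a::real_inner"
proof -
  have "u \<bullet> u = (norm u)\<^sup>2" by (simp only: power2_norm_eq_inner)
  then show "norm u = 1 \<Longrightarrow> u \<bullet> u = 1" by simp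
qed

lemma inner_ball:
  fixes V :: "'a::real_inner set"
  assumes V: "C11_convex_body V" and L: "L > 0" and lip: "normal_lipschitz V L"
    and x: "x \<in> frontier V" and u: "outer_unit_normal V x u"
  shows "ball (x - (1 / (2 * L)) *\<^sub>R u) (1 / (2 * L)) \<subseteq> V"
proof -
  define \<rho> where "\<rho> = 1 / (2 * L)"
  define c' where "c' = x - \<rho> *\<^sub>R u"
  have rho: "\<rho> > 0" unfolding \<rho>_def using L by simp
  have rhoL: "2 * \<rho> * L = 1" unfolding \<rho>_def using L by simp
  have clV: "closed V" and cvV: "convex V" and intV: "interior V \<noteq> {}"
    using V unfolding C11_convex_body_def convex_body_def by auto
  have nrm: "\<forall>z\<in>frontier V. \<exists>n. outer_unit_normal V z n"
    using V unfolding C11_convex_body_def by auto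
  have fV: "frontier V \<subseteq> V" using clV by (rule frontier_subset_closed)
  have xV: "x \<in> V" using x fV by blast
  have uu: "norm u = 1" and usup: "\<forall>y\<in>V. u \<bullet> (y - x) \<le> 0" using u unfolding outer_unit_normal_def by auto
  have A: "\<rho> \<le> dist z c'" if z: "z \<in> frontier V" for z
  proof -
    obtain n where n: "outer_unit_normal V z n" using nrm z by blast
    have nl: "norm (u - n) \<le> L * norm (x - z)" using lip x z u n unfolding normal_lipschitz_def by blast
    have nx: "n \<bullet> (x - z) \<le> 0" using n xV unfolding outer_unit_normal_def by blast
    have "(u - n) \<bullet> (x - z) \<le> norm (u - n) * norm (x - z)" by (rule norm_cauchy_schwarz)
    also have "\<dots> \<le> L * norm (x - z) * norm (x - z)" using nl by (intro mult_right_mono) auto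
    finally have ux: "u \<bullet> (x - z) \<le> L * (norm (x - z))\<^sup>2" using nx
      by (simp add: inner_diff_left power2_eq_square algebra_simps)
    have "(dist z c')\<^sup>2 = (norm ((z - x) + \<rho> *\<^sub>R u))\<^sup>2" unfolding c'_def dist_norm by (simp add: algebra_simps)
    also have "\<dots> = (norm (z - x))\<^sup>2 + 2 * \<rho> * (u \<bullet> (z - x)) + \<rho>\<^sup>2 * (norm u)\<^sup>2"
      unfolding nsq by (simp add: inner_commute power_mult_distrib)
    also have "u \<bullet> (z - x) = - (u \<bullet> (x - z))" by (simp add: inner_diff_right)
    also have "(norm (z - x))\<^sup>2 = (norm (x - z))\<^sup>2" by (simp add: norm_minus_commute)
    finally have "(dist z c')\<^sup>2 = (norm (x - z))\<^sup>2 - 2 * \<rho> * (u \<bullet> (x - z)) + \<rho>\<^sup>2" using uu by simp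
    moreover have "2 * \<rho> * (u \<bullet> (x - z)) \<le> 2 * \<rho> * (L * (norm (x - z))\<^sup>2)"
      using ux rho by (intro mult_left_mono) auto
    moreover have "2 * \<rho> * (L * (norm (x - z))\<^sup>2) = (norm (x - z))\<^sup>2" using rhoL by (simp add: algebra_simps)
    ultimately have sq: "\<rho>\<^sup>2 \<le> (dist z c')\<^sup>2" by linarith
    show ?thesis by (rule power2_le_imp_le[OF sq]) simp
  qed
  have Bne: "ball c' \<rho> \<inter> V \<noteq> {}"
  proof -
    obtain q where "q \<in> interior V" using intV by blast
    then obtain e where e: "e > 0" "ball q e \<subseteq> V" by (auto simp: mem_interior)
    have "q + (e/2) *\<^sub>R u \<in> V" using e uu by (intro subsetD[OF e(2)]) (simp add: dist_norm)
    then have "u \<bullet> (q + (e/2) *\<^sub>R u - x) \<le> 0" using usup by blast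
    moreover have "u \<bullet> (q + (e/2) *\<^sub>R u - x) = u \<bullet> (q - x) + (e/2) * (u \<bullet> u)"
      by (simp add: inner_add_right inner_diff_right)
    ultimately have uq: "u \<bullet> (q - x) \<le> - e/2" using uu_inner[OF uu] by simp
    define w where "w = q - x"
    have ww: "w \<bullet> w > 0" using uq e unfolding w_def by (cases "q = x") auto
    define t where "t = min 1 (\<rho> * e / (2 * (w \<bullet> w)))"
    have t: "0 < t" "t \<le> 1" "t * (w \<bullet> w) \<le> \<rho> * e / 2"
      using ww rho e unfolding t_def by (auto simp: min_def field_simps)
    define p where "p = (1 - t) *\<^sub>R x + t *\<^sub>R q"
    have pV: "p \<in> V" unfolding p_def using convexD[OF cvV xV, of q "1 - t" t] e t by (auto simp: subset_iff)
    have "p - c' = \<rho> *\<^sub>R u + t *\<^sub>R w" unfolding p_def c'_def w_def by (simp add: algebra_simps)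
    then have "(dist p c')\<^sup>2 = (norm (\<rho> *\<^sub>R u + t *\<^sub>R w))\<^sup>2" by (simp add: dist_norm)
    also have "\<dots> = \<rho>\<^sup>2 * (norm u)\<^sup>2 + 2 * \<rho> * t * (u \<bullet> w) + t * (t * (w \<bullet> w))"
    proof -
      have "(norm (t *\<^sub>R w))\<^sup>2 = t * (t * (w \<bullet> w))"
        by (simp only: norm_scaleR power_mult_distrib power2_abs power2_norm_eq_inner) (simp add: power2_eq_square)
      then show ?thesis unfolding nsq by (simp add: power_mult_distrib)
    qed
    also have "\<dots> \<le> \<rho>\<^sup>2 + 2 * \<rho> * t * (- e/2) + t * (\<rho> * e / 2)"
      using uu uq t rho unfolding w_def by (intro add_mono mult_left_mono) auto
    also have "\<dots> < \<rho>\<^sup>2" using rho t e by (simp add: algebra_simps)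
    finally have sq: "(dist p c')\<^sup>2 < \<rho>\<^sup>2" .
    have "dist p c' < \<rho>" by (rule power2_less_imp_less[OF sq]) (use rho in simp)
    then show ?thesis using pV by (auto simp: dist_commute)
  qed
  show ?thesis
  proof (rule ccontr)
    assume "\<not> ball (x - (1 / (2 * L)) *\<^sub>R u) (1 / (2 * L)) \<subseteq> V"
    then have "ball c' \<rho> - V \<noteq> {}" unfolding c'_def \<rho>_def by blast
    then have "ball c' \<rho> \<inter> frontier V \<noteq> {}" using connected_Int_frontier[OF connected_ball Bne] by blast
    then obtain z where "z \<in> ball c' \<rho>" "z \<in> frontier V" by blast
    then show False using A[of z] by (simp add: dist_commute)
  qed
qed

lemma necessity:
  fixes C :: "'a::real_inner set"
  assumes V: "C11_convex_body V" and CV: "C \<subseteq> frontier V" and NV: "\<forall>x\<in>C. outer_unit_normal V x (N x)"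
  shows "\<exists>r>0. \<forall>x\<in>C. \<forall>y\<in>C. N y \<bullet> (y - x) \<ge> r / 2 * (norm (N y - N x))\<^sup>2"
proof -
  obtain L where L: "L > 0" "normal_lipschitz V L" using V unfolding C11_convex_body_def by blast
  define \<rho> where "\<rho> = 1 / (2 * L)"
  have rho: "\<rho> > 0" unfolding \<rho>_def using L by simp
  show ?thesis
  proof (intro exI[of _ \<rho>] conjI ballI rho)
    fix x y assume x: "x \<in> C" and y: "y \<in> C"
    define u where "u = N x"
    define v where "v = N y"
    define c' where "c' = x - \<rho> *\<^sub>R u"
    have ball: "ball c' \<rho> \<subseteq> V" unfolding c'_def \<rho>_def u_def
      using inner_ball[OF V L, of x "N x"] CV NV x by blast
    have uu: "norm u = 1" using NV x unfolding u_def outer_unit_normal_def by blast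
    have vv: "norm v = 1" and vsup: "\<forall>p\<in>V. v \<bullet> (p - y) \<le> 0"
      using NV y unfolding v_def outer_unit_normal_def by auto
    have key: "v \<bullet> (c' - y) + \<rho> \<le> 0"
    proof (rule ccontr)
      define g where "g = v \<bullet> (c' - y) + \<rho>"
      assume "\<not> ?thesis"
      then have g: "g > 0" unfolding g_def by simp
      define s where "s = max 0 (\<rho> - g/2)"
      have s: "0 \<le> s" "s < \<rho>" unfolding s_def using g rho by auto
      have "c' + s *\<^sub>R v \<in> ball c' \<rho>" using s vv by (simp add: dist_norm)
      then have "v \<bullet> (c' + s *\<^sub>R v - y) \<le> 0" using ball vsup by blast
      moreover have "v \<bullet> (c' + s *\<^sub>R v - y) = v \<bullet> (c' - y) + s * (v \<bullet> v)"
        by (simp add: inner_add_right inner_diff_right)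
      ultimately have le: "v \<bullet> (c' - y) + s \<le> 0" using uu_inner[OF vv] by simp
      show False
      proof (cases "\<rho> - g/2 \<le> 0")
        case True
        then have "s = 0" unfolding s_def by simp
        then show False using le True unfolding g_def using rho by simp
      next
        case False
        then have "s = \<rho> - g/2" unfolding s_def by simp
        then show False using le g g_def by linarith
      qed
    qed
    have "v \<bullet> (c' - y) = v \<bullet> x - \<rho> * (v \<bullet> u) - v \<bullet> y" unfolding c'_def by (simp add: inner_diff_right)
    then have k2: "v \<bullet> (y - x) \<ge> \<rho> * (1 - v \<bullet> u)" using key by (simp add: inner_diff_right algebra_simps)
    have "(norm (v - u))\<^sup>2 = v \<bullet> v - 2 * (v \<bullet> u) + u \<bullet> u"
      unfolding power2_norm_eq_inner by (simp add: inner_diff_left inner_diff_right inner_commute)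
    also have "\<dots> = 2 - 2 * (v \<bullet> u)" using uu vv by (simp add: power2_norm_eq_inner[symmetric])
    finally have e: "(norm (v - u))\<^sup>2 = 2 - 2 * (v \<bullet> u)" .
    have "\<rho> / 2 * (norm (v - u))\<^sup>2 = \<rho> * (1 - v \<bullet> u)" unfolding e by (simp add: algebra_simps)
    then show "\<rho> / 2 * (norm (N y - N x))\<^sup>2 \<le> N y \<bullet> (y - x)" using k2 unfolding u_def v_def by linarith
  qed
qed

theorem theorem1p3:
  fixes C :: "'a::{real_inner,complete_space} set" and N :: "'a \<Rightarrow> 'a"
  assumes "\<forall>x\<in>C. norm (N x) = 1"
  shows "((\<exists>V. C11_convex_body V \<and> C \<subseteq> frontier V \<and> (\<forall>x\<in>C. outer_unit_normal V x (N x)))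
          \<longleftrightarrow> (\<exists>r>0. \<forall>x\<in>C. \<forall>y\<in>C. N y \<bullet> (y - x) \<ge> r / 2 * (norm (N y - N x))\<^sup>2))
       \<and> (\<forall>r>0. (\<forall>x\<in>C. \<forall>y\<in>C. N y \<bullet> (y - x) \<ge> r / 2 * (norm (N y - N x))\<^sup>2) \<longrightarrow>
            (\<exists>V. C11_convex_body V \<and> C \<subseteq> frontier V \<and> (\<forall>x\<in>C. outer_unit_normal V x (N x))
                 \<and> normal_lipschitz V (1 / r) \<and> (bounded C \<longrightarrow> bounded V)))"
proof (intro conjI iffI allI impI)
  assume "\<exists>V. C11_convex_body V \<and> C \<subseteq> frontier V \<and> (\<forall>x\<in>C. outer_unit_normal V x (N x))"
  then show "\<exists>r>0. \<forall>x\<in>C. \<forall>y\<in>C. N y \<bullet> (y - x) \<ge> r / 2 * (norm (N y - N x))\<^sup>2"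
    using necessity by blast
next
  assume "\<exists>r>0. \<forall>x\<in>C. \<forall>y\<in>C. N y \<bullet> (y - x) \<ge> r / 2 * (norm (N y - N x))\<^sup>2"
  then obtain r where "r > 0" "\<forall>x\<in>C. \<forall>y\<in>C. N y \<bullet> (y - x) \<ge> r / 2 * (norm (N y - N x))\<^sup>2" by blast
  then show "\<exists>V. C11_convex_body V \<and> C \<subseteq> frontier V \<and> (\<forall>x\<in>C. outer_unit_normal V x (N x))"
    using construct[OF assms] by blast
next
  fix r :: real assume "r > 0" "\<forall>x\<in>C. \<forall>y\<in>C. N y \<bullet> (y - x) \<ge> r / 2 * (norm (N y - N x))\<^sup>2"
  then show "\<exists>V. C11_convex_body V \<and> C \<subseteq> frontier V \<and> (\<forall>x\<in>C. outer_unit_normal V x (N x))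
                 \<and> normal_lipschitz V (1 / r) \<and> (bounded C \<longrightarrow> bounded V)"
    using construct[OF assms] by blast
qed

end
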